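(* Let $(Z,\|\cdot\|_Z)$ be a real Banach space. Fix $p\in[2,\infty)$, $\gamma\in(0,1)$, $m,n\in\mathbb N$ and $k\in\{1,\ldots,n\}$. Suppose that every $f:\mathbb Z_{2m}^n\to Z$ satisfies $$\frac{\gamma}{2^n\binom nk}\sum_{\substack{S\subset\{1,\ldots,n\}\\|S|=k}}\sum_{\varepsilon\in\{-1,1\}^n}\sum_{x\in\mathbb Z_{2m}^n}\frac{\|f(x+m\varepsilon_S)-f(x)\|_Z^p}{m^p}\le\frac kn\sum_{j=1}^n\sum_{x\in\mathbb Z_{2m}^n}\|f(x+e_j)-f(x)\|_Z^p+\frac{(k/n)^{p/2}}{2^n}\sum_{\varepsilon\in\{-1,1\}^n}\sum_{x\in\mathbb Z_{2m}^n}\|f(x+\varepsilon)-f(x)\|_Z^p.$$ Then for every $z_1,\ldots,z_n\in Z$, $$\frac{(2/\pi)^{2p}\gamma}{2^n\binom nk}\sum_{\substack{S\subset\{1,\ldots,n\}\\|S|=k}}\sum_{\varepsilon\in\{-1,1\}^n}\Big\|\sum_{j\in S}\varepsilon_jz_j\Big\|_Z^p\le\frac kn\sum_{j=1}^n\|z_j\|_Z^p+\frac{(k/n)^{p/2}}{2^n}\sum_{\varepsilon\in\{-1,1\}^n}\Big\|\sum_{j=1}^n\varepsilon_jz_j\Big\|_Z^p.$$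
   Context: $\mathbb Z_M^n=(\mathbb Z/M\mathbb Z)^n$, integer vectors added modulo $M$. $e_j$ standard basis vectors; $\varepsilon_S=\sum_{j\in S}\varepsilon_je_j$. *)

theory Defs
  imports "HOL-Analysis.Analysis"
begin

text \<open>The discrete torus (Z/2mZ)^n, coordinates indexed by {1..n},
  each coordinate represented by its residue in {0..<2m}.\<close>
definition torus :: "nat \<Rightarrow> nat \<Rightarrow> (nat \<Rightarrow> int) set" where
  "torus m n = PiE {1..n} (\<lambda>_. {0..<2 * int m})"

definition tadd :: "nat \<Rightarrow> nat \<Rightarrow> (nat \<Rightarrow> int) \<Rightarrow> (nat \<Rightarrow> int) \<Rightarrow> (nat \<Rightarrow> int)" where
  "tadd m n x y = restrict (\<lambda>i. (x i + y i) mod (2 * int m)) {1..n}"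

definition signs :: "nat \<Rightarrow> (nat \<Rightarrow> int) set" where
  "signs n = PiE {1..n} (\<lambda>_. {-1, 1})"

definition ebasis :: "nat \<Rightarrow> nat \<Rightarrow> int" where
  "ebasis j = (\<lambda>i. if i = j then 1 else 0)"

definition epsS :: "(nat \<Rightarrow> int) \<Rightarrow> nat set \<Rightarrow> nat \<Rightarrow> int" where
  "epsS eps S = (\<lambda>j. if j \<in> S then eps j else 0)"

end

theory Submission
  imports Defs
begin


definition G :: "nat \<Rightarrow> int \<Rightarrow> real" where
  "G m t = \<bar>real_of_int (t mod (2 * int m)) - real m\<bar> - real m / 2"

lemma G_mod: "G m (t mod (2 * int m)) = G m t"
  by (simp add: G_def)

lemma G_shift: assumes "1 \<le> m" shows "G m (t + int m) = - G m t"
proof -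
  define r where "r = t mod (2 * int m)"
  have r: "0 \<le> r" "r < 2 * int m" using assms by (auto simp: r_def)
  show ?thesis
  proof (cases "r < int m")
    case True
    then have "(t + int m) mod (2 * int m) = r + int m"
      using r unfolding r_def by (smt (verit) mod_add_left_eq mod_pos_pos_trivial)
    then show ?thesis using True r unfolding G_def r_def[symmetric] by simp
  next
    case False
    then have "(t + int m) mod (2 * int m) = r - int m"
    proof -
      have "(t + int m) mod (2 * int m) = (r + int m) mod (2 * int m)"
        unfolding r_def by (simp add: mod_add_left_eq)
      also have "r + int m = (r - int m) + 2 * int m" by simp
      also have "((r - int m) + 2 * int m) mod (2 * int m) = (r - int m) mod (2 * int m)"
        by (rule mod_add_self2)
      also have "\<dots> = r - int m" using r False by (intro mod_pos_pos_trivial) auto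
      finally show ?thesis .
    qed
    then show ?thesis using False r unfolding G_def r_def[symmetric] by simp
  qed
qed

lemma G_shift': assumes "1 \<le> m" shows "G m (t - int m) = - G m t"
  using G_shift[OF assms, of "t - int m"] by simp

lemma G_step: assumes "1 \<le> m" shows "\<bar>G m (t + 1) - G m t\<bar> = 1"
proof -
  define r where "r = t mod (2 * int m)"
  have r: "0 \<le> r" "r < 2 * int m" using assms by (auto simp: r_def)
  show ?thesis
  proof (cases "r + 1 < 2 * int m")
    case True
    then have "(t + 1) mod (2 * int m) = r + 1"
      using r unfolding r_def by (smt (verit) mod_add_left_eq mod_pos_pos_trivial)
    moreover have "real_of_int r + 1 \<le> real m \<or> real_of_int r \<ge> real m"
      by (metis of_int_1 of_int_add of_int_le_iff of_int_of_nat_eq zle_add1_eq_le linorder_not_less)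
    ultimately show ?thesis unfolding G_def r_def[symmetric] by auto
  next
    case False
    then have rr: "r = 2 * int m - 1" using r by simp
    then have "(t + 1) mod (2 * int m) = 0"
      unfolding r_def by (metis add.commute diff_add_cancel mod_add_right_eq mod_self)
    then show ?thesis using rr assms unfolding G_def r_def[symmetric] by simp
  qed
qed

lemma G_step': assumes "1 \<le> m" shows "\<bar>G m (t - 1) - G m t\<bar> = 1"
  using G_step[OF assms, of "t - 1"] by simp

lemma powr_convex0: assumes "p \<ge> 1" shows "convex_on {0..} (\<lambda>x::real. x powr p)"
proof (rule convex_onI)
  show "convex {0::real..}" by simp
  fix t x y :: real assume t: "0 < t" "t < 1" and xy: "x \<in> {0..}" "y \<in> {0..}"
  show "((1 - t) *\<^sub>R x + t *\<^sub>R y) powr p \<le> (1 - t) * x powr p + t * y powr p"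
  proof (cases "x > 0 \<and> y > 0")
    case True
    then show ?thesis using powr_convex[OF assms] t unfolding convex_on_def by auto
  next
    case False
    have le: "s powr p \<le> s" if "0 \<le> s" "s \<le> 1" for s :: real
      using powr_mono'[of 1 p s] that assms by simp
    show ?thesis
    proof (cases "x = 0")
      case True
      have "(t * y) powr p = t powr p * y powr p" using t xy by (simp add: powr_mult)
      also have "\<dots> \<le> t * y powr p" using le[of t] t by (intro mult_right_mono) auto
      finally show ?thesis using True by simp
    next
      case False
      then have "y = 0" using \<open>\<not> (x > 0 \<and> y > 0)\<close> xy by auto
      have "((1-t) * x) powr p = (1-t) powr p * x powr p" using t xy by (simp add: powr_mult)
      also have "\<dots> \<le> (1-t) * x powr p" using le[of "1-t"] t by (intro mult_right_mono) auto
      finally show ?thesis using \<open>y = 0\<close> by simp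
    qed
  qed
qed



lemma tadd_app: "j \<in> {1..n} \<Longrightarrow> tadd m n x v j = (x j + v j) mod (2 * int m)"
  by (simp add: tadd_def)

definition fz :: "nat \<Rightarrow> nat \<Rightarrow> (nat \<Rightarrow> 'z::real_vector) \<Rightarrow> (nat \<Rightarrow> int) \<Rightarrow> 'z" where
  "fz m n z x = (\<Sum>j=1..n. G m (x j) *\<^sub>R z j)"

lemma fdiff: "fz m n z (tadd m n x v) - fz m n z x = (\<Sum>j=1..n. (G m (x j + v j) - G m (x j)) *\<^sub>R z j)"
  unfolding fz_def sum_subtractf[symmetric] scaleR_diff_left
  by (intro sum.cong refl) (simp add: tadd_app G_mod)

definition flip :: "nat \<Rightarrow> nat \<Rightarrow> (nat \<Rightarrow> int) \<Rightarrow> (nat \<Rightarrow> int) \<Rightarrow> (nat \<Rightarrow> int)" where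
  "flip m n d x = restrict (\<lambda>j. if d j = 1 then x j else (x j + int m) mod (2 * int m)) {1..n}"

lemma finite_torus: "finite (torus m n)" by (simp add: torus_def finite_PiE)
lemma finite_signs: "finite (signs n)" by (simp add: signs_def finite_PiE)
lemma card_torus: "card (torus m n) = (2 * m) ^ n"
  by (simp add: torus_def card_PiE nat_mult_distrib power_mult_distrib)
lemma card_signs: "card (signs n) = 2 ^ n"
  by (simp add: signs_def card_PiE numeral_2_eq_2)

lemma flip_in: assumes "1 \<le> m" "x \<in> torus m n" shows "flip m n d x \<in> torus m n"
  using assms unfolding torus_def flip_def by (auto simp: PiE_iff)

lemma flip_flip: assumes "1 \<le> m" "x \<in> torus m n" "d \<in> signs n" shows "flip m n d (flip m n d x) = x"
proof (rule ext)
  fix j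
  show "flip m n d (flip m n d x) j = x j"
  proof (cases "j \<in> {1..n}")
    case True
    have x: "0 \<le> x j" "x j < 2 * int m" using assms True by (auto simp: torus_def PiE_iff)
    have "((x j + int m) mod (2 * int m) + int m) mod (2 * int m) = (x j + 2 * int m) mod (2 * int m)"
      by (simp add: mod_add_left_eq add.assoc)
    also have "\<dots> = x j" using x by simp
    finally show ?thesis using True by (simp add: flip_def)
  next
    case False
    have "x j = undefined" using assms(2) False unfolding torus_def by (rule PiE_arb)
    then show ?thesis using False by (auto simp: flip_def)
  qed
qed

lemma sum_flip: assumes "1 \<le> m" "d \<in> signs n"
  shows "(\<Sum>x\<in>torus m n. \<Phi> (flip m n d x)) = (\<Sum>x\<in>torus m n. \<Phi> x)"
proof -
  have "bij_betw (flip m n d) (torus m n) (torus m n)"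
    by (rule bij_betw_byWitness[where f'="flip m n d"]) (use assms flip_flip flip_in in auto)
  then show ?thesis by (rule sum.reindex_bij_betw)
qed

lemma G_flip: assumes "1 \<le> m" "d \<in> signs n" "j \<in> {1..n}"
  shows "G m (flip m n d x j + e) = real_of_int (d j) * G m (x j + e)"
proof -
  have "d j = 1 \<or> d j = -1" using assms by (auto simp: signs_def PiE_iff)
  then show ?thesis
  proof
    assume "d j = 1" then show ?thesis using assms by (simp add: flip_def)
  next
    assume "d j = -1"
    then have "G m (flip m n d x j + e) = G m ((x j + int m) mod (2 * int m) + e)" using assms by (simp add: flip_def)
    also have "\<dots> = G m ((x j + e + int m) mod (2 * int m))"
      by (metis G_mod mod_add_left_eq add.commute add.left_commute)
    also have "\<dots> = - G m (x j + e)" using G_mod G_shift assms(1) by simp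
    finally show ?thesis using \<open>d j = -1\<close> by simp
  qed
qed

definition rs :: "nat \<Rightarrow> (nat \<Rightarrow> int) \<Rightarrow> (nat \<Rightarrow> int) \<Rightarrow> (nat \<Rightarrow> int)" where
  "rs n c d = restrict (\<lambda>j. c j * d j) {1..n}"

lemma sign_mult: "(a::int) \<in> {-1,1} \<Longrightarrow> b \<in> {-1,1} \<Longrightarrow> a * b \<in> {-1,1}"
  by auto

lemma sum_rs: assumes "\<forall>j\<in>{1..n}. c j \<in> {-1, 1}"
  shows "(\<Sum>d\<in>signs n. \<Phi> (rs n c d)) = (\<Sum>d\<in>signs n. \<Phi> d)"
proof -
  have in1: "rs n c d \<in> signs n" if "d \<in> signs n" for d
    using that assms sign_mult unfolding signs_def rs_def by (auto simp: PiE_iff)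
  have inv: "rs n c (rs n c d) = d" if "d \<in> signs n" for d
  proof (rule ext)
    fix j show "rs n c (rs n c d) j = d j"
    proof (cases "j \<in> {1..n}")
      case True
      then have "c j = -1 \<or> c j = 1" using assms by auto
      then have "c j * c j = 1" by auto
      then show ?thesis using True unfolding rs_def by (simp add: mult.assoc[symmetric])
    next
      case False
      have "d j = undefined" using that False unfolding signs_def by (rule PiE_arb)
      then show ?thesis using False unfolding rs_def by auto
    qed
  qed
  have "bij_betw (rs n c) (signs n) (signs n)"
    by (rule bij_betw_byWitness[where f'="rs n c"]) (use in1 inv in auto)
  then show ?thesis by (rule sum.reindex_bij_betw)
qed

lemma sum_coord: assumes "j \<in> I" "finite I"
  shows "(\<Sum>x\<in>PiE I (\<lambda>_. B). h (x j)) = real (card B) ^ (card I - 1) * (\<Sum>b\<in>B. h b)"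
proof -
  define J where "J = I - {j}"
  have I: "I = insert j J" "j \<notin> J" "finite J" using assms by (auto simp: J_def)
  have "(\<Sum>x\<in>PiE I (\<lambda>_. B). h (x j)) = (\<Sum>x\<in>(\<lambda>(y, g). g(j := y)) ` (B \<times> PiE J (\<lambda>_. B)). h (x j))"
    using I PiE_insert_eq by metis
  also have "\<dots> = (\<Sum>(y,g)\<in>B \<times> PiE J (\<lambda>_. B). h y)"
    by (subst sum.reindex) (use inj_combinator[OF I(2), of "\<lambda>_. B"] in \<open>auto simp: case_prod_beta intro!: sum.cong\<close>)
  also have "\<dots> = (\<Sum>y\<in>B. real (card (PiE J (\<lambda>_. B))) * h y)"
    by (simp add: sum.cartesian_product[symmetric])
  also have "card (PiE J (\<lambda>_. B)) = card B ^ card J" using I by (simp add: card_PiE)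
  also have "card J = card I - 1" using assms by (simp add: J_def)
  finally show ?thesis by (simp add: sum_distrib_left)
qed



lemma jensen_norm:
  fixes v :: "'a \<Rightarrow> 'z::real_normed_vector"
  assumes "finite X" "X \<noteq> {}" "1 \<le> p"
  shows "real (card X) * norm ((1 / real (card X)) *\<^sub>R (\<Sum>x\<in>X. v x)) powr p \<le> (\<Sum>x\<in>X. norm (v x) powr p)"
proof -
  define N where "N = real (card X)"
  have N: "N > 0" using assms by (simp add: N_def card_gt_0_iff)
  have "norm ((1 / N) *\<^sub>R (\<Sum>x\<in>X. v x)) = (1 / N) * norm (\<Sum>x\<in>X. v x)"
    using N by simp
  also have "\<dots> \<le> (1 / N) * (\<Sum>x\<in>X. norm (v x))"
    using N by (intro mult_left_mono norm_sum) auto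
  also have "\<dots> = (\<Sum>x\<in>X. (1 / N) *\<^sub>R norm (v x))" by (simp add: sum_distrib_left)
  finally have 1: "norm ((1 / N) *\<^sub>R (\<Sum>x\<in>X. v x)) \<le> (\<Sum>x\<in>X. (1 / N) *\<^sub>R norm (v x))" .
  have 2: "norm ((1 / N) *\<^sub>R (\<Sum>x\<in>X. v x)) powr p \<le> (\<Sum>x\<in>X. (1 / N) *\<^sub>R norm (v x)) powr p"
    by (rule powr_mono2) (use assms 1 in auto)
  have 3: "(\<Sum>x\<in>X. (1 / N) *\<^sub>R norm (v x)) powr p \<le> (\<Sum>x\<in>X. (1 / N) * norm (v x) powr p)"
    by (rule convex_on_sum[OF assms(1,2) powr_convex0[OF assms(3)]]) (use N assms in \<open>auto simp: N_def\<close>)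
  have "(\<Sum>x\<in>X. (1 / N) * norm (v x) powr p) = (1 / N) * (\<Sum>x\<in>X. norm (v x) powr p)"
    by (simp add: sum_distrib_left)
  then have "norm ((1 / N) *\<^sub>R (\<Sum>x\<in>X. v x)) powr p \<le> (1 / N) * (\<Sum>x\<in>X. norm (v x) powr p)"
    using 2 3 by linarith
  then have "N * norm ((1 / N) *\<^sub>R (\<Sum>x\<in>X. v x)) powr p \<le> N * ((1 / N) * (\<Sum>x\<in>X. norm (v x) powr p))"
    using N by (intro mult_left_mono) auto
  then show ?thesis using N by (simp add: N_def)
qed


lemma half_sum: "(\<Sum>r<N. \<bar>real N / 2 - real r\<bar>) \<ge> real N ^ 2 / 4"
proof (induction N rule: less_induct)
  case (less N)
  show ?case
  proof (cases "N < 2")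
    case True
    then have "N = 0 \<or> N = 1" by auto
    then show ?thesis by auto
  next
    case False
    then obtain K where K: "N = K + 2" by (metis add.commute le_Suc_ex not_less)
    have "(\<Sum>r<N. \<bar>real N / 2 - real r\<bar>) = \<bar>real N / 2\<bar> + (\<Sum>r<K+1. \<bar>real N / 2 - real (Suc r)\<bar>)"
      using sum.lessThan_Suc_shift[of "\<lambda>r. \<bar>real N / 2 - real r\<bar>" "K+1"] unfolding K by simp
    also have "(\<Sum>r<K+1. \<bar>real N / 2 - real (Suc r)\<bar>) = (\<Sum>r<K+1. \<bar>real K / 2 - real r\<bar>)"
      unfolding K by (intro sum.cong) (auto simp: field_simps)
    also have "\<dots> = (\<Sum>r<K. \<bar>real K / 2 - real r\<bar>) + real K / 2" by simp
    finally have eq: "(\<Sum>r<N. \<bar>real N / 2 - real r\<bar>) = \<bar>real N / 2\<bar> + ((\<Sum>r<K. \<bar>real K / 2 - real r\<bar>) + real K / 2)" .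
    have IH: "(\<Sum>r<K. \<bar>real K / 2 - real r\<bar>) \<ge> real K ^ 2 / 4" using less K by simp
    have rN: "real N = real K + 2" using K by simp
    have sq: "real N ^ 2 / 4 = real K ^ 2 / 4 + real K + 1" unfolding rN by (simp add: power2_eq_square field_simps)
    have "\<bar>real N / 2\<bar> = real K / 2 + 1" unfolding rN by simp
    then show ?thesis using eq IH sq by linarith
  qed
qed

lemma G_avg: assumes "1 \<le> m" shows "(\<Sum>t\<in>{0..<2 * int m}. \<bar>G m t\<bar>) \<ge> real m ^ 2 / 2"
proof -
  have "int ` {0..<2*m} = {int 0..<int (2*m)}" by (rule image_int_atLeastLessThan)
  then have "{0..<2 * int m} = int ` {..<2*m}" by (simp add: lessThan_atLeast0)
  then have "(\<Sum>t\<in>{0..<2 * int m}. \<bar>G m t\<bar>) = (\<Sum>r<2*m. \<bar>G m (int r)\<bar>)"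
    by (simp add: sum.reindex)
  also have "\<dots> = (\<Sum>r<m. \<bar>G m (int r)\<bar>) + (\<Sum>r<m. \<bar>G m (int (m + r))\<bar>)"
  proof -
    have "{..<2*m} = {..<m} \<union> {m..<2*m}" by auto
    then have "(\<Sum>r<2*m. \<bar>G m (int r)\<bar>) = (\<Sum>r\<in>{..<m} \<union> {m..<2*m}. \<bar>G m (int r)\<bar>)"
      by simp
    also have "\<dots> = (\<Sum>r<m. \<bar>G m (int r)\<bar>) + (\<Sum>r\<in>{m..<2*m}. \<bar>G m (int r)\<bar>)"
      by (rule sum.union_disjoint) auto
    also have "(\<Sum>r\<in>{m..<2*m}. \<bar>G m (int r)\<bar>) = (\<Sum>r\<in>{0+m..<m+m}. \<bar>G m (int r)\<bar>)"
      by (simp add: mult_2)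
    also have "\<dots> = (\<Sum>r\<in>{0..<m}. \<bar>G m (int (r + m))\<bar>)"
      by (rule sum.shift_bounds_nat_ivl)
    finally show ?thesis by (simp add: lessThan_atLeast0 add.commute)
  qed
  also have "(\<Sum>r<m. \<bar>G m (int (m + r))\<bar>) = (\<Sum>r<m. \<bar>G m (int r)\<bar>)"
    using G_shift[OF assms] by (simp add: add.commute)
  also have "(\<Sum>r<m. \<bar>G m (int r)\<bar>) = (\<Sum>r<m. \<bar>real m / 2 - real r\<bar>)"
    by (intro sum.cong refl) (auto simp: G_def)
  finally show ?thesis using half_sum[of m] by simp
qed



lemma T2: assumes m: "1 \<le> m" and j: "j \<in> {1..n}"
  shows "(\<Sum>x\<in>torus m n. norm (fz m n z (tadd m n x (ebasis j)) - fz m n z x) powr p)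
       = real ((2 * m) ^ n) * norm (z j) powr p"
proof -
  have "norm (fz m n z (tadd m n x (ebasis j)) - fz m n z x) = norm (z j)" for x
  proof -
    have "fz m n z (tadd m n x (ebasis j)) - fz m n z x
        = (\<Sum>i=1..n. (if i = j then (G m (x j + 1) - G m (x j)) *\<^sub>R z j else 0))"
      unfolding fdiff by (intro sum.cong refl) (auto simp: ebasis_def)
    also have "\<dots> = (G m (x j + 1) - G m (x j)) *\<^sub>R z j" using j by simp
    finally show ?thesis using G_step[OF m] by simp
  qed
  then show ?thesis by (simp add: card_torus)
qed

lemma sign_cases: "d \<in> signs n \<Longrightarrow> j \<in> {1..n} \<Longrightarrow> d j = 1 \<or> d j = -1"
  by (auto simp: signs_def PiE_iff)

lemma T3: assumes m: "1 \<le> m" and eps: "eps \<in> signs n"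
  shows "(\<Sum>x\<in>torus m n. norm (fz m n z (tadd m n x eps) - fz m n z x) powr p)
       = real ((2 * m) ^ n) / 2 ^ n * (\<Sum>d\<in>signs n. norm (\<Sum>j=1..n. real_of_int (d j) *\<^sub>R z j) powr p)"
proof -
  define D where "D x j = G m (x j + eps j) - G m (x j)" for x j
  define Psi where "Psi d x = norm (\<Sum>j=1..n. (real_of_int (d j) * D x j) *\<^sub>R z j) powr p" for d x
  define Phi where "Phi d = norm (\<Sum>j=1..n. real_of_int (d j) *\<^sub>R z j) powr p" for d
  have lhs: "(\<Sum>x\<in>torus m n. norm (fz m n z (tadd m n x eps) - fz m n z x) powr p)
      = (\<Sum>x\<in>torus m n. norm (\<Sum>j=1..n. D x j *\<^sub>R z j) powr p)"
    unfolding fdiff D_def by simp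
  have a: "(\<Sum>x\<in>torus m n. norm (\<Sum>j=1..n. D x j *\<^sub>R z j) powr p) = (\<Sum>x\<in>torus m n. Psi d x)"
    if d: "d \<in> signs n" for d
  proof -
    have Df: "D (flip m n d x) j = real_of_int (d j) * D x j" if "j \<in> {1..n}" for x j
      unfolding D_def using G_flip[OF m d that, of x "eps j"] G_flip[OF m d that, of x 0]
      by (simp add: algebra_simps)
    have "(\<Sum>x\<in>torus m n. Psi d x) = (\<Sum>x\<in>torus m n. norm (\<Sum>j=1..n. D (flip m n d x) j *\<^sub>R z j) powr p)"
      unfolding Psi_def
      by (intro sum.cong refl arg_cong[where f="\<lambda>t. norm t powr p"]) (simp add: Df)
    also have "\<dots> = (\<Sum>x\<in>torus m n. norm (\<Sum>j=1..n. D x j *\<^sub>R z j) powr p)"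
      by (rule sum_flip[OF m d])
    finally show ?thesis by simp
  qed
  have c: "(\<Sum>d\<in>signs n. Psi d x) = (\<Sum>d\<in>signs n. Phi d)" for x
  proof -
    define c where "c j = (if D x j \<ge> 0 then 1 else (-1::int))" for j
    have cD: "real_of_int (c j) = D x j" if "j \<in> {1..n}" for j
    proof -
      have "eps j = 1 \<or> eps j = -1" by (rule sign_cases[OF eps that])
      then have "\<bar>D x j\<bar> = 1"
      proof
        assume "eps j = 1" then show ?thesis unfolding D_def using G_step[OF m, of "x j"] by simp
      next
        assume "eps j = -1" then show ?thesis unfolding D_def using G_step'[OF m, of "x j"] by simp
      qed
      then show ?thesis unfolding c_def by auto
    qed
    have "(\<Sum>d\<in>signs n. Phi (rs n c d)) = (\<Sum>d\<in>signs n. Phi d)"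
      by (rule sum_rs) (auto simp: c_def)
    moreover have "Phi (rs n c d) = Psi d x" for d
      unfolding Phi_def Psi_def
      by (intro arg_cong[where f="\<lambda>t. norm t powr p"] sum.cong refl) (auto simp: rs_def cD)
    ultimately show ?thesis by simp
  qed
  have "real (card (signs n)) * (\<Sum>x\<in>torus m n. norm (\<Sum>j=1..n. D x j *\<^sub>R z j) powr p)
      = (\<Sum>d\<in>signs n. \<Sum>x\<in>torus m n. Psi d x)"
    using a by (simp add: sum_constant[symmetric] del: sum_constant) 
  also have "\<dots> = (\<Sum>x\<in>torus m n. \<Sum>d\<in>signs n. Psi d x)" by (rule sum.swap)
  also have "\<dots> = real (card (torus m n)) * (\<Sum>d\<in>signs n. Phi d)" using c by simp
  finally show ?thesis unfolding lhs card_signs card_torus Phi_def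
    by (simp add: field_simps)
qed



lemma T1a: assumes m: "1 \<le> m" and p: "1 \<le> p" and S: "S \<subseteq> {1..n}"
  shows "real (2 ^ n) * (\<Sum>x\<in>torus m n. norm (\<Sum>j\<in>S. G m (x j) *\<^sub>R z j) powr p)
       \<ge> real ((2 * m) ^ n) * (real m / 4) powr p * (\<Sum>d\<in>signs n. norm (\<Sum>j\<in>S. real_of_int (d j) *\<^sub>R z j) powr p)"
proof -
  define N where "N = real ((2 * m) ^ n)"
  have N: "N > 0" using m by (simp add: N_def)
  have ne: "torus m n \<noteq> {}"
  proof -
    have "card (torus m n) > 0" using m by (simp add: card_torus)
    then show ?thesis by auto
  qed
  define A where "A = (\<Sum>t\<in>{0..<2 * int m}. \<bar>G m t\<bar>) / (2 * real m)"
  have A: "A \<ge> real m / 4"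
  proof -
    have "(\<Sum>t\<in>{0..<2 * int m}. \<bar>G m t\<bar>) \<ge> real m * real m / 2" using G_avg[OF m] by (simp add: power2_eq_square)
    then show ?thesis unfolding A_def using m by (simp add: field_simps)
  qed
  define Psi where "Psi d x = norm (\<Sum>j\<in>S. (real_of_int (d j) * G m (x j)) *\<^sub>R z j) powr p" for d x
  define Phi where "Phi x d = norm (\<Sum>j\<in>S. (real_of_int (d j) * \<bar>G m (x j)\<bar>) *\<^sub>R z j) powr p" for x d
  have a: "(\<Sum>x\<in>torus m n. norm (\<Sum>j\<in>S. G m (x j) *\<^sub>R z j) powr p) = (\<Sum>x\<in>torus m n. Psi d x)"
    if d: "d \<in> signs n" for d
  proof -
    have "(\<Sum>x\<in>torus m n. Psi d x) = (\<Sum>x\<in>torus m n. norm (\<Sum>j\<in>S. G m (flip m n d x j) *\<^sub>R z j) powr p)"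
      unfolding Psi_def
      by (intro sum.cong refl arg_cong[where f="\<lambda>t. norm t powr p"])
         (use G_flip[OF m d, of _ _ 0] S in auto)
    also have "\<dots> = (\<Sum>x\<in>torus m n. norm (\<Sum>j\<in>S. G m (x j) *\<^sub>R z j) powr p)"
      by (rule sum_flip[OF m d])
    finally show ?thesis by simp
  qed
  have c: "(\<Sum>d\<in>signs n. Psi d x) = (\<Sum>d\<in>signs n. Phi x d)" for x
  proof -
    define c where "c j = (if G m (x j) \<ge> 0 then 1 else (-1::int))" for j
    have "(\<Sum>d\<in>signs n. Phi x (rs n c d)) = (\<Sum>d\<in>signs n. Phi x d)"
      by (rule sum_rs) (auto simp: c_def)
    moreover have "Phi x (rs n c d) = Psi d x" for d
      unfolding Phi_def Psi_def
      by (intro arg_cong[where f="\<lambda>t. norm t powr p"] sum.cong refl) (use S in \<open>auto simp: rs_def c_def\<close>)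
    ultimately show ?thesis by simp
  qed
  have mean: "(1 / real (card (torus m n))) *\<^sub>R (\<Sum>x\<in>torus m n. \<Sum>j\<in>S. (real_of_int (d j) * \<bar>G m (x j)\<bar>) *\<^sub>R z j)
      = A *\<^sub>R (\<Sum>j\<in>S. real_of_int (d j) *\<^sub>R z j)" for d
  proof -
    have "(\<Sum>x\<in>torus m n. \<Sum>j\<in>S. (real_of_int (d j) * \<bar>G m (x j)\<bar>) *\<^sub>R z j)
        = (\<Sum>j\<in>S. (real_of_int (d j) * (\<Sum>x\<in>torus m n. \<bar>G m (x j)\<bar>)) *\<^sub>R z j)"
      by (subst sum.swap) (simp add: scaleR_sum_left[symmetric] sum_distrib_left)
    also have "\<dots> = (\<Sum>j\<in>S. (real_of_int (d j) * (N * A)) *\<^sub>R z j)"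
    proof (intro sum.cong refl)
      fix j assume "j \<in> S"
      then have j: "j \<in> {1..n}" using S by auto
      then have n: "n \<ge> 1" by simp
      have "(\<Sum>x\<in>torus m n. \<bar>G m (x j)\<bar>) = real (card {0..<2 * int m}) ^ (card {1..n} - 1) * (\<Sum>t\<in>{0..<2 * int m}. \<bar>G m t\<bar>)"
        unfolding torus_def by (rule sum_coord[OF j]) simp
      also have "\<dots> = N * A"
      proof -
        have "real (2 * m) ^ n = real (2 * m) * real (2 * m) ^ (n - 1)"
          using n by (metis power_eq_if not_one_le_zero)
        then show ?thesis unfolding N_def A_def using m by (simp add: field_simps)
      qed
      finally show "(real_of_int (d j) * (\<Sum>x\<in>torus m n. \<bar>G m (x j)\<bar>)) *\<^sub>R z j = (real_of_int (d j) * (N * A)) *\<^sub>R z j"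
        by simp
    qed
    moreover have cN: "real (card (torus m n)) = N" by (simp add: card_torus N_def)
    ultimately show ?thesis using N by (simp add: cN scaleR_sum_right mult.commute)
  qed
  have "real (card (signs n)) * (\<Sum>x\<in>torus m n. norm (\<Sum>j\<in>S. G m (x j) *\<^sub>R z j) powr p)
      = (\<Sum>d\<in>signs n. \<Sum>x\<in>torus m n. Psi d x)"
    using a by (simp add: sum_constant[symmetric] del: sum_constant)
  also have "\<dots> = (\<Sum>x\<in>torus m n. \<Sum>d\<in>signs n. Psi d x)" by (rule sum.swap)
  also have "\<dots> = (\<Sum>d\<in>signs n. \<Sum>x\<in>torus m n. Phi x d)" using c by (simp add: sum.swap[of _ "torus m n"])
  also have "\<dots> \<ge> (\<Sum>d\<in>signs n. N * (A powr p * norm (\<Sum>j\<in>S. real_of_int (d j) *\<^sub>R z j) powr p))"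
  proof (intro sum_mono)
    fix d assume "d \<in> signs n"
    have "real (card (torus m n)) * norm ((1 / real (card (torus m n))) *\<^sub>R (\<Sum>x\<in>torus m n. \<Sum>j\<in>S. (real_of_int (d j) * \<bar>G m (x j)\<bar>) *\<^sub>R z j)) powr p
        \<le> (\<Sum>x\<in>torus m n. Phi x d)"
      unfolding Phi_def
      by (rule jensen_norm[OF finite_torus _ p]) (use ne in auto)
    moreover have "norm (A *\<^sub>R (\<Sum>j\<in>S. real_of_int (d j) *\<^sub>R z j)) powr p = A powr p * norm (\<Sum>j\<in>S. real_of_int (d j) *\<^sub>R z j) powr p"
      using A m by (simp add: powr_mult)
    ultimately show "N * (A powr p * norm (\<Sum>j\<in>S. real_of_int (d j) *\<^sub>R z j) powr p) \<le> (\<Sum>x\<in>torus m n. Phi x d)"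
      unfolding mean by (simp add: card_torus N_def)
  qed
  finally have 1: "real (2 ^ n) * (\<Sum>x\<in>torus m n. norm (\<Sum>j\<in>S. G m (x j) *\<^sub>R z j) powr p)
      \<ge> N * A powr p * (\<Sum>d\<in>signs n. norm (\<Sum>j\<in>S. real_of_int (d j) *\<^sub>R z j) powr p)"
    by (simp add: card_signs sum_distrib_left mult.assoc)
  have "(real m / 4) powr p \<le> A powr p" using A m p by (intro powr_mono2) auto
  then have "N * (real m / 4) powr p * (\<Sum>d\<in>signs n. norm (\<Sum>j\<in>S. real_of_int (d j) *\<^sub>R z j) powr p)
      \<le> N * A powr p * (\<Sum>d\<in>signs n. norm (\<Sum>j\<in>S. real_of_int (d j) *\<^sub>R z j) powr p)"
    using N by (intro mult_right_mono mult_left_mono sum_nonneg) auto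
  then show ?thesis using 1 unfolding N_def by linarith
qed



lemma T1b: assumes m: "1 \<le> m" and p: "1 \<le> p" and S: "S \<subseteq> {1..n}" and eps: "eps \<in> signs n"
  shows "(\<Sum>x\<in>torus m n. norm (fz m n z (tadd m n x (\<lambda>j. int m * epsS eps S j)) - fz m n z x) powr p / real m powr p)
     \<ge> real ((2 * m) ^ n) / 2 ^ n * (1 / 2) powr p * (\<Sum>d\<in>signs n. norm (\<Sum>j\<in>S. real_of_int (d j) *\<^sub>R z j) powr p)"
proof -
  define Q where "Q = (\<Sum>d\<in>signs n. norm (\<Sum>j\<in>S. real_of_int (d j) *\<^sub>R z j) powr p)"
  have Q: "Q \<ge> 0" unfolding Q_def by (intro sum_nonneg) auto
  have eq: "norm (fz m n z (tadd m n x (\<lambda>j. int m * epsS eps S j)) - fz m n z x) powr p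
      = 2 powr p * norm (\<Sum>j\<in>S. G m (x j) *\<^sub>R z j) powr p" for x
  proof -
    have "fz m n z (tadd m n x (\<lambda>j. int m * epsS eps S j)) - fz m n z x
        = (\<Sum>j=1..n. if j \<in> S then (- 2 * G m (x j)) *\<^sub>R z j else 0)"
      unfolding fdiff
    proof (intro sum.cong refl)
      fix j assume j: "j \<in> {1..n}"
      show "(G m (x j + int m * epsS eps S j) - G m (x j)) *\<^sub>R z j = (if j \<in> S then (- 2 * G m (x j)) *\<^sub>R z j else 0)"
      proof (cases "j \<in> S")
        case True
        have "eps j = 1 \<or> eps j = -1" by (rule sign_cases[OF eps j])
        then have "G m (x j + int m * epsS eps S j) = - G m (x j)"
          using True G_shift[OF m] G_shift'[OF m] by (auto simp: epsS_def)
        then show ?thesis using True by simp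
      qed (simp add: epsS_def)
    qed
    also have "\<dots> = (\<Sum>j\<in>S. (- 2 * G m (x j)) *\<^sub>R z j)"
      using S by (simp add: sum.inter_restrict[symmetric] Int_absorb1)
    also have "\<dots> = (- 2) *\<^sub>R (\<Sum>j\<in>S. G m (x j) *\<^sub>R z j)" by (simp add: scaleR_sum_right)
    finally show ?thesis by (simp add: powr_mult)
  qed
  have "(\<Sum>x\<in>torus m n. norm (fz m n z (tadd m n x (\<lambda>j. int m * epsS eps S j)) - fz m n z x) powr p / real m powr p)
      = 2 powr p / real m powr p * (\<Sum>x\<in>torus m n. norm (\<Sum>j\<in>S. G m (x j) *\<^sub>R z j) powr p)"
    unfolding eq by (simp add: sum_distrib_left sum_divide_distrib)
  also have "\<dots> \<ge> 2 powr p / real m powr p * (real ((2 * m) ^ n) * (real m / 4) powr p * Q / 2 ^ n)"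
    using T1a[OF m p S, of z] by (intro mult_left_mono) (auto simp: Q_def field_simps)
  moreover have "2 powr p / real m powr p * (real ((2 * m) ^ n) * (real m / 4) powr p * Q / 2 ^ n)
      = real ((2 * m) ^ n) / 2 ^ n * (2 powr p * (real m / 4) powr p / real m powr p) * Q"
    by (simp add: field_simps)
  moreover have "2 powr p * (real m / 4) powr p / real m powr p = (1 / 2) powr p"
    using m by (simp add: powr_mult[symmetric] powr_divide[symmetric])
  ultimately show ?thesis unfolding Q_def by simp
qed



theorem mainTheorem6:
  fixes p \<gamma> :: real and m n k :: nat
  assumes p: "2 \<le> p"
    and gamma: "0 < \<gamma>" "\<gamma> < 1"
    and m: "1 \<le> m"
    and k: "1 \<le> k" "k \<le> n"
    and H: "\<forall>f :: (nat \<Rightarrow> int) \<Rightarrow> 'z::banach.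
      \<gamma> / (2 ^ n * real (n choose k)) *
        (\<Sum>S\<in>{S. S \<subseteq> {1..n} \<and> card S = k}. \<Sum>eps\<in>signs n. \<Sum>x\<in>torus m n.
           norm (f (tadd m n x (\<lambda>j. int m * epsS eps S j)) - f x) powr p / real m powr p)
      \<le> real k / real n * (\<Sum>j=1..n. \<Sum>x\<in>torus m n. norm (f (tadd m n x (ebasis j)) - f x) powr p)
        + (real k / real n) powr (p / 2) / 2 ^ n *
          (\<Sum>eps\<in>signs n. \<Sum>x\<in>torus m n. norm (f (tadd m n x eps) - f x) powr p)"
  shows "\<forall>z :: nat \<Rightarrow> 'z.
      (2 / pi) powr (2 * p) * \<gamma> / (2 ^ n * real (n choose k)) *
        (\<Sum>S\<in>{S. S \<subseteq> {1..n} \<and> card S = k}. \<Sum>eps\<in>signs n.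
           norm (\<Sum>j\<in>S. real_of_int (eps j) *\<^sub>R z j) powr p)
      \<le> real k / real n * (\<Sum>j=1..n. norm (z j) powr p)
        + (real k / real n) powr (p / 2) / 2 ^ n *
          (\<Sum>eps\<in>signs n. norm (\<Sum>j=1..n. real_of_int (eps j) *\<^sub>R z j) powr p)"
proof
  fix z :: "nat \<Rightarrow> 'z"
  have p1: "1 \<le> p" using p by simp
  define N where "N = real ((2 * m) ^ n)"
  have N: "N > 0" using m by (simp add: N_def)
  define SS where "SS = {S. S \<subseteq> {1..n} \<and> card S = k}"
  define Q where "Q S = (\<Sum>d\<in>signs n. norm (\<Sum>j\<in>S. real_of_int (d j) *\<^sub>R z j) powr p)" for S
  define K where "K = \<gamma> / (2 ^ n * real (n choose k))"
  have K: "K > 0" using gamma k by (simp add: K_def)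
  define R where "R = real k / real n * (\<Sum>j=1..n. norm (z j) powr p)
        + (real k / real n) powr (p / 2) / 2 ^ n *
          (\<Sum>eps\<in>signs n. norm (\<Sum>j=1..n. real_of_int (eps j) *\<^sub>R z j) powr p)"
  note HH = H[rule_format, of "fz m n z"]
  have lhs: "K * (\<Sum>S\<in>SS. \<Sum>eps\<in>signs n. \<Sum>x\<in>torus m n.
           norm (fz m n z (tadd m n x (\<lambda>j. int m * epsS eps S j)) - fz m n z x) powr p / real m powr p)
      \<ge> K * (N * (1 / 2) powr p * (\<Sum>S\<in>SS. Q S))"
  proof -
    have "(\<Sum>S\<in>SS. \<Sum>eps\<in>signs n. \<Sum>x\<in>torus m n.
           norm (fz m n z (tadd m n x (\<lambda>j. int m * epsS eps S j)) - fz m n z x) powr p / real m powr p)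
        \<ge> (\<Sum>S\<in>SS. \<Sum>eps\<in>signs n. N / 2 ^ n * (1 / 2) powr p * Q S)"
      unfolding N_def Q_def
      by (intro sum_mono T1b[OF m p1]) (auto simp: SS_def)
    also have "(\<Sum>S\<in>SS. \<Sum>eps\<in>signs n. N / 2 ^ n * (1 / 2) powr p * Q S) = N * (1 / 2) powr p * (\<Sum>S\<in>SS. Q S)"
      by (simp add: card_signs sum_distrib_left)
    finally show ?thesis using K by (intro mult_left_mono) auto
  qed
  have rhs: "real k / real n * (\<Sum>j=1..n. \<Sum>x\<in>torus m n. norm (fz m n z (tadd m n x (ebasis j)) - fz m n z x) powr p)
        + (real k / real n) powr (p / 2) / 2 ^ n *
          (\<Sum>eps\<in>signs n. \<Sum>x\<in>torus m n. norm (fz m n z (tadd m n x eps) - fz m n z x) powr p)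
      = N * R"
  proof -
    have 1: "(\<Sum>j=1..n. \<Sum>x\<in>torus m n. norm (fz m n z (tadd m n x (ebasis j)) - fz m n z x) powr p)
        = N * (\<Sum>j=1..n. norm (z j) powr p)"
      unfolding N_def sum_distrib_left by (intro sum.cong refl T2[OF m])
    have 2: "(\<Sum>eps\<in>signs n. \<Sum>x\<in>torus m n. norm (fz m n z (tadd m n x eps) - fz m n z x) powr p)
        = N * (\<Sum>eps\<in>signs n. norm (\<Sum>j=1..n. real_of_int (eps j) *\<^sub>R z j) powr p)"
    proof -
      have "(\<Sum>eps\<in>signs n. \<Sum>x\<in>torus m n. norm (fz m n z (tadd m n x eps) - fz m n z x) powr p)
          = (\<Sum>eps\<in>signs n. N / 2 ^ n * (\<Sum>d\<in>signs n. norm (\<Sum>j=1..n. real_of_int (d j) *\<^sub>R z j) powr p))"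
        unfolding N_def by (intro sum.cong refl T3[OF m])
      also have "\<dots> = N * (\<Sum>eps\<in>signs n. norm (\<Sum>j=1..n. real_of_int (eps j) *\<^sub>R z j) powr p)"
        by (simp add: card_signs)
      finally show ?thesis .
    qed
    show ?thesis unfolding 1 2 R_def by (simp add: algebra_simps)
  qed
  have main: "K * (N * (1 / 2) powr p * (\<Sum>S\<in>SS. Q S)) \<le> N * R"
    using HH lhs rhs unfolding K_def SS_def by linarith
  then have main': "(1 / 2) powr p * K * (\<Sum>S\<in>SS. Q S) \<le> R"
    using N by (simp add: algebra_simps)
  have Qnn: "(\<Sum>S\<in>SS. Q S) \<ge> 0" unfolding Q_def by (intro sum_nonneg) auto
  have pi: "(2 / pi) powr (2 * p) \<le> (1 / 2) powr p"
  proof -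
    have "(2 / pi) powr (2 * p) = ((2 / pi) powr 2) powr p" by (simp only: powr_powr)
    also have "(2 / pi) powr 2 = 4 / pi ^ 2" by (simp add: power2_eq_square powr_numeral)
    also have "4 / pi ^ 2 \<le> 1 / 2"
    proof -
      have "pi ^ 2 \<ge> 3 ^ 2" using pi_gt3 by (intro power_mono) auto
      then show ?thesis by (simp add: field_simps)
    qed
    then have "(4 / pi ^ 2) powr p \<le> (1 / 2) powr p" using p by (intro powr_mono2) auto
    finally show ?thesis .
  qed
  have "(2 / pi) powr (2 * p) * K * (\<Sum>S\<in>SS. Q S) \<le> (1 / 2) powr p * K * (\<Sum>S\<in>SS. Q S)"
    using pi K Qnn by (intro mult_right_mono) auto
  then show "(2 / pi) powr (2 * p) * \<gamma> / (2 ^ n * real (n choose k)) *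
        (\<Sum>S\<in>{S. S \<subseteq> {1..n} \<and> card S = k}. \<Sum>eps\<in>signs n.
           norm (\<Sum>j\<in>S. real_of_int (eps j) *\<^sub>R z j) powr p)
      \<le> real k / real n * (\<Sum>j=1..n. norm (z j) powr p)
        + (real k / real n) powr (p / 2) / 2 ^ n *
          (\<Sum>eps\<in>signs n. norm (\<Sum>j=1..n. real_of_int (eps j) *\<^sub>R z j) powr p)"
    using main' unfolding K_def SS_def Q_def R_def by (simp add: mult.assoc)
qed


end
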